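(* Let $f$ be an analytic function on $\mathbb{D}=\{z\in\mathbb{C}:|z|<1\}$ with $f(0)=0$, $f'(0)=1$ and $f(z)\neq 0$ for $0<|z|<1$, and suppose $f$ is not the identity function. Then the set $U_f=\{c\in\mathbb{C}: K_c[f]\text{ is univalent on }\mathbb{D}\}$ is a compact, polynomially convex subset of $\mathbb{C}$ and $0\in U_f$.
   Context: For such $f$, $f(z)/z$ extends to a non-vanishing analytic function on $\mathbb{D}$ with value $1$ at $0$; let $\operatorname{Log}(f(z)/z)$ denote the branch of $\log(f(z)/z)$ on $\mathbb{D}$ vanishing at $z=0$. For $c\in\mathbb{C}$ the power deformation is $K_c[f](z)=z\exp\big(c\operatorname{Log}(f(z)/z)\big)$. A compact set $E\subset\mathbb{C}$ is polynomially convex if and only if $\mathbb{C}\setminus E$ is connected. *)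

theory Defs
  imports "HOL-Complex_Analysis.Complex_Analysis" "HOL-Computational_Algebra.Polynomial"
begin

definition quot_fun :: "(complex \<Rightarrow> complex) \<Rightarrow> complex \<Rightarrow> complex" where
  "quot_fun f z = (if z = 0 then deriv f 0 else f z / z)"

definition LogQ :: "(complex \<Rightarrow> complex) \<Rightarrow> complex \<Rightarrow> complex" where
  "LogQ f = (SOME g. g holomorphic_on ball 0 1 \<and> g 0 = 0 \<and>
               (\<forall>z\<in>ball 0 1. exp (g z) = quot_fun f z))"

definition Kdef :: "complex \<Rightarrow> (complex \<Rightarrow> complex) \<Rightarrow> complex \<Rightarrow> complex" where
  "Kdef c f z = z * exp (c * LogQ f z)"

definition univalent_on_disc :: "(complex \<Rightarrow> complex) \<Rightarrow> bool" where
  "univalent_on_disc g \<longleftrightarrow> g holomorphic_on ball 0 1 \<and> inj_on g (ball 0 1)"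

definition U_set :: "(complex \<Rightarrow> complex) \<Rightarrow> complex set" where
  "U_set f = {c. univalent_on_disc (Kdef c f)}"

definition polynomially_convex :: "complex set \<Rightarrow> bool" where
  "polynomially_convex E \<longleftrightarrow>
     (\<forall>z. (\<forall>p :: complex poly. norm (poly p z) \<le> (SUP w\<in>E. norm (poly p w))) \<longrightarrow> z \<in> E)"

end

theory Submission imports Defs begin

definition approx :: "complex set \<Rightarrow> (complex \<Rightarrow> complex) \<Rightarrow> bool" where
  "approx K F \<longleftrightarrow> (\<forall>e>0. \<exists>p::complex poly. \<forall>z\<in>K. norm (F z - poly p z) < e)"

lemma approx_comp:
  assumes "approx K u" "\<And>z. z \<in> K \<Longrightarrow> norm (u z) \<le> M"
  shows "approx K (\<lambda>z. poly P (u z))"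
  unfolding approx_def
proof (intro allI impI)
  fix e :: real assume "e > 0"
  have "uniformly_continuous_on (cball 0 (M+1)) (poly P)"
    by (intro compact_uniformly_continuous continuous_intros) auto
  then obtain d where d0: "d > 0" and d1: "\<forall>x\<in>cball 0 (M+1). \<forall>y\<in>cball 0 (M+1). dist y x < d \<longrightarrow> dist (poly P y) (poly P x) < e"
    unfolding uniformly_continuous_on_def using \<open>e > 0\<close> by blast
  have d: "d > 0" "\<And>x y. x \<in> cball 0 (M+1) \<Longrightarrow> y \<in> cball 0 (M+1) \<Longrightarrow> dist y x < d \<Longrightarrow> dist (poly P y) (poly P x) < e"
    using d0 d1 by auto
  have md: "min d 1 > 0" using d0 by simp
  obtain p where p: "\<And>z. z \<in> K \<Longrightarrow> norm (u z - poly p z) < min d 1"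
    using assms(1) md unfolding approx_def by blast
  show "\<exists>p. \<forall>z\<in>K. norm (poly P (u z) - poly p z) < e"
  proof (intro exI ballI)
    fix z assume z: "z \<in> K"
    have 1: "u z \<in> cball 0 (M+1)" using assms(2)[OF z] by auto
    have "norm (poly p z) \<le> norm (u z) + norm (u z - poly p z)"
      using norm_triangle_sub[of "poly p z" "u z"] by (simp add: norm_minus_commute)
    hence 2: "poly p z \<in> cball 0 (M+1)" using assms(2)[OF z] p[OF z] by auto
    have "dist (poly p z) (u z) < d" using p[OF z] by (simp add: dist_norm norm_minus_commute)
    from d(2)[OF 1 2 this] show "norm (poly P (u z) - poly (pcompose P p) z) < e"
      by (simp add: poly_pcompose dist_norm norm_minus_commute)
  qed
qed

lemma approx_geom:
  assumes q: "\<And>z. z \<in> K \<Longrightarrow> norm (q z) \<le> 1/2" and u: "\<And>z. z \<in> K \<Longrightarrow> norm (u z) \<le> M"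
    and ap: "\<And>N. approx K (\<lambda>z. u z * (\<Sum>n<N. q z ^ n))"
  shows "approx K (\<lambda>z. u z / (1 - q z))"
  unfolding approx_def
proof (intro allI impI)
  fix e :: real assume "e > 0"
  have M0: "M \<ge> 0" if "z \<in> K" for z using u[OF that] norm_ge_zero order_trans by blast
  have "(\<lambda>N. 2 * (M+1) * (1/2::real)^N) \<longlonglongrightarrow> 2*(M+1) * 0"
    by (intro tendsto_intros) auto
  hence "\<forall>\<^sub>F N in sequentially. 2 * (M+1) * (1/2::real)^N < e/2"
    using \<open>e>0\<close> by (intro order_tendstoD(2)) auto
  then obtain N where N: "2 * (M+1) * (1/2::real)^N < e/2"
    by (meson eventually_sequentially order.refl)
  obtain p where p: "\<And>z. z \<in> K \<Longrightarrow> norm (u z * (\<Sum>n<N. q z ^ n) - poly p z) < e/2"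
    using ap[of N] \<open>e>0\<close> unfolding approx_def by (meson half_gt_zero)
  show "\<exists>p. \<forall>z\<in>K. norm (u z / (1 - q z) - poly p z) < e"
  proof (intro exI ballI)
    fix z assume z: "z \<in> K"
    have q1: "q z \<noteq> 1" using q[OF z] by auto
    have n1: "norm (1 - q z) \<ge> 1/2"
      using norm_triangle_ineq2[of 1 "q z"] q[OF z] by simp
    have eq: "u z / (1 - q z) - u z * (\<Sum>n<N. q z ^ n) = u z * q z ^ N / (1 - q z)"
    proof -
      have d0: "1 - q z \<noteq> 0" using q1 by simp
      have "u z * (\<Sum>n<N. q z ^ n) = u z * (1 - q z ^ N) / (1 - q z)"
        using q1 by (simp add: sum_gp_strict)
      thus ?thesis using d0 by (simp add: diff_divide_distrib[symmetric] algebra_simps)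
    qed
    have "norm (u z * q z ^ N / (1 - q z)) = norm (u z) * norm (q z) ^ N / norm (1 - q z)"
      by (simp add: norm_mult norm_divide norm_power)
    also have "\<dots> \<le> M * (1/2)^N / (1/2)"
      using u[OF z] q[OF z] n1 M0[OF z]
      by (intro frac_le mult_mono power_mono) auto
    also have "\<dots> = 2 * M * (1/2)^N" by simp
    also have "\<dots> \<le> 2 * (M+1) * (1/2)^N" by (intro mult_right_mono) auto
    also have "\<dots> < e/2" using N .
    finally have a: "norm (u z / (1 - q z) - u z * (\<Sum>n<N. q z ^ n)) < e/2" using eq by simp
    have "norm (u z / (1 - q z) - poly p z) \<le> norm (u z / (1 - q z) - u z * (\<Sum>n<N. q z ^ n)) + norm (u z * (\<Sum>n<N. q z ^ n) - poly p z)"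
      using norm_triangle_ineq[of "u z / (1 - q z) - u z * (\<Sum>n<N. q z ^ n)" "u z * (\<Sum>n<N. q z ^ n) - poly p z"] by simp
    thus "norm (u z / (1 - q z) - poly p z) < e" using a p[OF z] by simp
  qed
qed

lemma approx_step:
  assumes d: "d > 0" "\<And>z. z \<in> K \<Longrightarrow> d \<le> norm (z - w)" and w': "norm (w' - w) \<le> d/2"
    and ap: "approx K (\<lambda>z. 1 / (z - w))"
  shows "approx K (\<lambda>z. 1 / (z - w'))"
proof -
  define u where "u z = 1 / (z - w)" for z
  define q where "q z = (w' - w) * u z" for z
  have ub: "norm (u z) \<le> 1/d" if "z \<in> K" for z
    using d that by (simp add: u_def norm_divide divide_simps)
  have qb: "norm (q z) \<le> 1/2" if "z \<in> K" for z
  proof -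
    have "norm (q z) = norm (w' - w) * norm (u z)" by (simp add: q_def norm_mult)
    also have "\<dots> \<le> (d/2) * (1/d)" using ub[OF that] w' d by (intro mult_mono) auto
    also have "\<dots> = 1/2" using d by simp
    finally show ?thesis .
  qed
  have "approx K (\<lambda>z. u z / (1 - q z))"
  proof (rule approx_geom[OF qb ub])
    fix N
    define P where "P = (\<Sum>n<N. monom ((w' - w)^n) (Suc n))"
    have "approx K (\<lambda>z. poly P (u z))" using approx_comp[OF _ ub] ap by (simp add: u_def)
    moreover have "poly P (u z) = u z * (\<Sum>n<N. q z ^ n)" for z
      by (simp add: P_def poly_sum poly_monom q_def sum_distrib_left power_mult_distrib mult_ac)
    ultimately show "approx K (\<lambda>z. u z * (\<Sum>n<N. q z ^ n))" by simp
  qed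
  moreover have "u z / (1 - q z) = 1 / (z - w')" if "z \<in> K" for z
  proof -
    have "z - w \<noteq> 0" using d(1) d(2)[OF that] by auto
    thus ?thesis by (simp add: u_def q_def field_simps)
  qed
  ultimately show ?thesis unfolding approx_def by simp
qed

lemma approx_base:
  assumes K: "\<And>z. z \<in> K \<Longrightarrow> norm z \<le> R" and w: "norm w \<ge> 2*R + 1" "R \<ge> 0"
  shows "approx K (\<lambda>z. 1 / (z - w))"
proof -
  have w0: "w \<noteq> 0" using w by auto
  define u where "u z = - 1 / w" for z :: complex
  define q where "q z = z / w" for z
  have ub: "norm (u z) \<le> 1" if "z \<in> K" for z
    using w by (simp add: u_def norm_divide divide_simps)
  have qb: "norm (q z) \<le> 1/2" if "z \<in> K" for z
    using w K[OF that] w0 by (simp add: q_def norm_divide divide_simps)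
  have "approx K (\<lambda>z. u z / (1 - q z))"
  proof (rule approx_geom[OF qb ub])
    fix N
    define P where "P = (\<Sum>n<N. monom (- 1 / w * (1/w)^n) n)"
    have "poly P z = u z * (\<Sum>n<N. q z ^ n)" for z
      by (simp add: P_def poly_sum poly_monom q_def u_def sum_distrib_left power_divide)
    thus "approx K (\<lambda>z. u z * (\<Sum>n<N. q z ^ n))" unfolding approx_def
      by (intro allI impI exI[of _ P] ballI) simp
  qed
  moreover have "u z / (1 - q z) = 1 / (z - w)" if "z \<in> K" for z
  proof -
    have "z \<noteq> w" using K[OF that] w by auto
    thus ?thesis using w0 by (simp add: u_def q_def field_simps)
  qed
  ultimately show ?thesis unfolding approx_def by simp
qed

lemma approx_connected:
  assumes "compact K" "connected S" "S \<inter> K = {}" "c0 \<in> S" "\<And>R. \<exists>w\<in>S. R < norm w"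
  shows "approx K (\<lambda>z. 1 / (z - c0))"
proof -
  obtain R where R: "\<And>z. z \<in> K \<Longrightarrow> norm z \<le> R" "R \<ge> 0"
    using compact_imp_bounded[OF assms(1)] unfolding bounded_iff by (meson norm_ge_zero order_trans)
  obtain w where w: "w \<in> S" "2*R+1 < norm w" using assms(5) by blast
  show ?thesis
  proof (rule connected_induction_simple[OF assms(2) w(1) assms(4), where P = "\<lambda>w. approx K (\<lambda>z. 1 / (z - w))"])
    show "approx K (\<lambda>z. 1 / (z - w))" using approx_base[OF R(1) _ R(2)] w by simp
  next
    fix a assume a: "a \<in> S"
    have "open (- K)" using assms(1) compact_imp_closed by auto
    moreover have "a \<in> - K" using a assms(3) by auto
    ultimately obtain d where d: "d > 0" "ball a d \<subseteq> - K" using open_contains_ball by blast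
    have dK: "d \<le> norm (z - a)" if "z \<in> K" for z
    proof (rule ccontr)
      assume "\<not> d \<le> norm (z - a)"
      hence "z \<in> ball a d" by (simp add: dist_norm norm_minus_commute)
      thus False using d that by auto
    qed
    show "\<exists>T. openin (top_of_set S) T \<and> a \<in> T \<and> (\<forall>x\<in>T. \<forall>y\<in>T. approx K (\<lambda>z. 1 / (z - x)) \<longrightarrow> approx K (\<lambda>z. 1 / (z - y)))"
    proof (intro exI conjI ballI impI)
      show "openin (top_of_set S) (S \<inter> ball a (d/3))" by (simp add: openin_open_Int)
      show "a \<in> S \<inter> ball a (d/3)" using a d by auto
      fix x y assume x: "x \<in> S \<inter> ball a (d/3)" and y: "y \<in> S \<inter> ball a (d/3)"
        and ax: "approx K (\<lambda>z. 1 / (z - x))"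
      have xa: "norm (a - x) < d/3" using x by (simp add: dist_norm)
      have ya: "norm (y - a) < d/3" using y by (simp add: dist_norm norm_minus_commute)
      have dx: "2*d/3 \<le> norm (z - x)" if "z \<in> K" for z
        using dK[OF that] xa norm_triangle_ineq[of "z - x" "x - a"] by (simp add: norm_minus_commute)
      have "approx K (\<lambda>z. 1 / (z - a))"
        by (rule approx_step[OF _ dx _ ax]) (use d xa in auto)
      moreover have "norm (y - a) \<le> d/2" using ya d by auto
      ultimately show "approx K (\<lambda>z. 1 / (z - y))"
        using approx_step[OF d(1) dK] by blast
    qed
  qed
qed

lemma not_hull:
  assumes "compact K" "K \<noteq> {}" "c0 \<notin> K" "approx K (\<lambda>z. 1 / (z - c0))"
  shows "\<exists>p::complex poly. (SUP w\<in>K. norm (poly p w)) < norm (poly p c0)"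
proof -
  obtain R where R: "\<And>z. z \<in> K \<Longrightarrow> norm z \<le> R" "R \<ge> 0"
    using compact_imp_bounded[OF assms(1)] unfolding bounded_iff by (meson norm_ge_zero order_trans)
  define e where "e = 1 / (2 * (R + norm c0 + 1))"
  have Rp: "R + norm c0 + 1 > 0" using R(2) by (smt (verit) norm_ge_zero)
  have e: "e > 0" using Rp unfolding e_def by simp
  then obtain p where p: "\<And>z. z \<in> K \<Longrightarrow> norm (1 / (z - c0) - poly p z) < e"
    using assms(4) unfolding approx_def by blast
  define Q where "Q = 1 - [:-c0, 1:] * p"
  have "norm (poly Q z) \<le> 1/2" if z: "z \<in> K" for z
  proof -
    have zc: "z - c0 \<noteq> 0" using z assms(3) by auto
    have "poly Q z = (z - c0) * (1 / (z - c0) - poly p z)"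
      using zc by (simp add: Q_def field_simps)
    hence "norm (poly Q z) = norm (z - c0) * norm (1 / (z - c0) - poly p z)" by (simp add: norm_mult)
    also have "\<dots> \<le> (R + norm c0 + 1) * e"
    proof (intro mult_mono)
      show "norm (z - c0) \<le> R + norm c0 + 1" using R(1)[OF z] norm_triangle_ineq4[of z c0] by simp
    qed (use p[OF z] R in auto)
    also have "\<dots> = 1/2" using Rp by (simp add: e_def)
    finally show ?thesis .
  qed
  hence "(SUP w\<in>K. norm (poly Q w)) \<le> 1/2" using assms(2) by (intro cSUP_least) auto
  moreover have "poly Q c0 = 1" by (simp add: Q_def)
  ultimately show ?thesis by (intro exI[of _ Q]) auto
qed

lemma fsigma_ball: "fsigma (ball (0::complex) R)"
proof -
  have "fsigma_in euclidean (ball (0::complex) R)"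
    by (intro open_imp_fsigma_in metrizable_space_euclidean) auto
  hence "\<exists>C. (\<forall>n. closedin euclidean (C n)) \<and> (\<forall>n. C n \<subseteq> C (Suc n)) \<and> \<Union> (range C) = ball (0::complex) R"
    by (simp only: fsigma_in_ascending)
  then show ?thesis
  proof (elim exE conjE)
    fix C :: "nat \<Rightarrow> complex set"
    assume C1: "\<forall>n. closedin euclidean (C n)" and C2: "\<Union> (range C) = ball 0 R"
    have "\<And>n. closed (C n)" using C1 closed_closedin by blast
    hence "fsigma (\<Union> (range C))" by (rule fsigma.intros)
    thus ?thesis unfolding C2 .
  qed
qed

lemma logq_exists:
  fixes f :: "complex \<Rightarrow> complex"
  assumes "f holomorphic_on ball 0 1" "f 0 = 0" "deriv f 0 = 1"
    and "\<forall>z. 0 < norm z \<and> norm z < 1 \<longrightarrow> f z \<noteq> 0"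
  shows "LogQ f holomorphic_on ball 0 1 \<and> LogQ f 0 = 0 \<and> (\<forall>z\<in>ball 0 1. exp (LogQ f z) = quot_fun f z)"
proof -
  have qf: "quot_fun f = (\<lambda>z. if z = 0 then deriv f 0 else (f z - f 0) / (z - 0))"
    using assms(2) by (auto simp: quot_fun_def fun_eq_iff)
  have hol: "quot_fun f holomorphic_on ball 0 1"
    unfolding qf by (rule pole_lemma[OF assms(1)]) auto
  have nz: "quot_fun f z \<noteq> 0" if "z \<in> ball 0 1" for z
    using that assms(3,4) by (auto simp: quot_fun_def)
  obtain h where h: "h holomorphic_on ball 0 1" "\<And>x. x \<in> ball 0 1 \<Longrightarrow> exp (h x) = quot_fun f x"
    using holomorphic_logarithm_exists[OF convex_ball open_ball hol nz, of 0] by auto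
  have q0: "quot_fun f 0 = 1" using assms(3) by (simp add: quot_fun_def)
  have "\<exists>g. g holomorphic_on ball 0 1 \<and> g 0 = 0 \<and> (\<forall>z\<in>ball 0 1. exp (g z) = quot_fun f z)"
  proof (intro exI conjI ballI)
    show "(\<lambda>z. h z - h 0) holomorphic_on ball 0 1" by (intro holomorphic_intros h(1))
    show "h 0 - h 0 = 0" by simp
    fix z assume z: "z \<in> ball (0::complex) 1"
    show "exp (h z - h 0) = quot_fun f z"
      using h(2)[OF z] h(2)[of 0] q0 by (simp add: exp_diff)
  qed
  thus ?thesis unfolding LogQ_def by (rule someI_ex)
qed

theorem theorem1p1:
  fixes f :: "complex \<Rightarrow> complex"
  assumes "f holomorphic_on ball 0 1"
    and "f 0 = 0"
    and "deriv f 0 = 1"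
    and "\<forall>z. 0 < norm z \<and> norm z < 1 \<longrightarrow> f z \<noteq> 0"
    and "\<exists>z\<in>ball 0 1. f z \<noteq> z"
  shows "compact (U_set f) \<and> polynomially_convex (U_set f) \<and> 0 \<in> U_set f"
proof -
  define g where "g = LogQ f"
  have g: "g holomorphic_on ball 0 1" "g 0 = 0" "\<And>z. z \<in> ball 0 1 \<Longrightarrow> exp (g z) = quot_fun f z"
    using logq_exists[OF assms(1-4)] unfolding g_def by auto
  have Kd: "Kdef c f = (\<lambda>z. z * exp (c * g z))" for c
    by (simp add: Kdef_def g_def fun_eq_iff)
  have Khol: "Kdef c f holomorphic_on ball 0 1" for c
    unfolding Kd by (intro holomorphic_intros g(1))
  have U_iff: "c \<in> U_set f \<longleftrightarrow> inj_on (\<lambda>z. z * exp (c * g z)) (ball 0 1)" for c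
    using Khol[of c] by (simp add: U_set_def univalent_on_disc_def Kd)
  have zeroU: "0 \<in> U_set f" unfolding U_iff by simp
  have gnz: "\<exists>z\<in>ball 0 1. g z \<noteq> 0"
  proof (rule ccontr)
    assume "\<not> ?thesis"
    hence g0: "\<And>z. z \<in> ball 0 1 \<Longrightarrow> g z = 0" by auto
    obtain z where z: "z \<in> ball 0 1" "f z \<noteq> z" using assms(5) by blast
    have "quot_fun f z = 1" using g(3)[OF z(1)] g0[OF z(1)] by simp
    thus False using z assms(2) by (cases "z = 0") (auto simp: quot_fun_def split: if_splits)
  qed
  have bnd: "\<exists>B. \<forall>c\<in>U_set f. norm c \<le> B"
  proof -
    define h where "h z = z * deriv g z" for z
    have hhol: "h holomorphic_on ball 0 1"
      unfolding h_def by (intro holomorphic_intros holomorphic_deriv g(1)) auto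
    have hnc: "\<not> h constant_on ball 0 1"
    proof
      assume "h constant_on ball 0 1"
      then obtain k where k: "\<And>z. z \<in> ball 0 1 \<Longrightarrow> h z = k" unfolding constant_on_def by blast
      have "h 0 = 0" by (simp add: h_def)
      hence "k = 0" using k[of 0] by simp
      hence h0: "\<And>z. z \<in> ball 0 1 \<Longrightarrow> h z = 0" using k by simp
      have "\<forall>x\<in>ball 0 1 - {0}. DERIV g x :> 0"
      proof
        fix x assume x: "x \<in> ball (0::complex) 1 - {0}"
        have "DERIV g x :> deriv g x" using g(1) x by (auto intro!: holomorphic_derivI)
        moreover have "deriv g x = 0" using h0[of x] x by (auto simp: h_def)
        ultimately show "DERIV g x :> 0" by simp
      qed
      then obtain k where k: "\<And>x. x \<in> ball 0 1 \<Longrightarrow> g x = k"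
        using DERIV_zero_connected_constant[of "ball 0 1" "{0}" g] g(1) holomorphic_on_imp_continuous_on by auto
      have "k = 0" using k[of 0] g(2) by simp
      thus False using gnz k by auto
    qed
    have "open (h ` ball 0 1)" by (rule open_mapping_thm[OF hhol]) (use hnc in auto)
    moreover have "0 \<in> h ` ball 0 1" by (force simp: h_def)
    ultimately obtain r where r: "r > 0" "ball 0 r \<subseteq> h ` ball 0 1" using open_contains_ball by blast
    have "norm c \<le> 1/r" if c: "c \<in> U_set f" for c
    proof (rule ccontr)
      assume "\<not> norm c \<le> 1/r"
      hence cr: "norm c > 1/r" by simp
      hence c0: "c \<noteq> 0" using r by auto
      have "norm (-1/c) < r" using cr r c0 by (simp add: norm_divide divide_simps mult.commute)
      hence "-1/c \<in> h ` ball 0 1" using r(2) by auto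
      then obtain z where z: "z \<in> ball 0 1" "h z = -1/c" by auto
      have "DERIV g z :> deriv g z" using g(1) z by (auto intro!: holomorphic_derivI)
      hence "((\<lambda>z. z * exp (c * g z)) has_field_derivative (exp (c * g z) + z * (exp (c * g z) * (c * deriv g z)))) (at z)"
        by (auto intro!: derivative_eq_intros)
      hence "deriv (\<lambda>z. z * exp (c * g z)) z = exp (c * g z) * (1 + c * h z)"
        by (simp add: DERIV_imp_deriv h_def algebra_simps)
      also have "\<dots> = 0" using z(2) c0 by simp
      finally have "deriv (\<lambda>z. z * exp (c * g z)) z = 0" .
      moreover have "deriv (\<lambda>z. z * exp (c * g z)) z \<noteq> 0"
        by (rule holomorphic_injective_imp_regular[OF _ _ _ z(1)])
           (use Khol[of c] c in \<open>auto simp: Kd U_iff\<close>)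
      ultimately show False by simp
    qed
    thus ?thesis by blast
  qed
  have clo: "closed (U_set f)"
  proof (clarsimp simp: closed_sequential_limits)
    fix s l assume s: "\<forall>n. s n \<in> U_set f" and l: "s \<longlonglongrightarrow> l"
    show "l \<in> U_set f" unfolding U_iff
    proof (rule Hurwitz_injective[of "ball 0 1" "\<lambda>n z. z * exp (s n * g z)"])
      show "(\<lambda>z. z * exp (s n * g z)) holomorphic_on ball 0 1" for n by (intro holomorphic_intros g(1))
      show "(\<lambda>z. z * exp (l * g z)) holomorphic_on ball 0 1" by (intro holomorphic_intros g(1))
      show "inj_on (\<lambda>z. z * exp (s n * g z)) (ball 0 1)" for n using s U_iff by blast
      show "\<not> (\<lambda>z. z * exp (l * g z)) constant_on ball 0 1"
      proof
        assume "(\<lambda>z. z * exp (l * g z)) constant_on ball 0 1"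
        then obtain k where k: "\<And>z. z \<in> ball 0 1 \<Longrightarrow> z * exp (l * g z) = k" unfolding constant_on_def by blast
        from k[of 0] k[of "1/2"] show False by simp
      qed
      fix C :: "complex set" assume C: "compact C" "C \<subseteq> ball 0 1"
      have "compact (g ` C)" using C g(1) by (intro compact_continuous_image holomorphic_on_imp_continuous_on) (auto intro: holomorphic_on_subset)
      hence "bounded (g ` C)" by (rule compact_imp_bounded)
      then obtain B where B0: "B > 0" and B1: "\<forall>y\<in>g ` C. norm y \<le> B"
        unfolding bounded_pos by blast
      have B: "B > 0" "\<And>z. z \<in> C \<Longrightarrow> norm (g z) \<le> B" using B0 B1 by auto
      show "uniform_limit C (\<lambda>n z. z * exp (s n * g z)) (\<lambda>z. z * exp (l * g z)) sequentially"
        unfolding uniform_limit_sequentially_iff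
      proof (intro allI impI)
        fix e :: real assume e: "e > 0"
        define E where "E = exp (norm l * B)"
        have E: "E > 0" by (simp add: E_def)
        have "isCont exp (0::complex)" by (rule isCont_exp)
        moreover have eE: "e / E > 0" using e E by simp
        ultimately obtain d where d0: "d > 0" and d1: "\<forall>t::complex. dist t 0 < d \<longrightarrow> dist (exp t) (exp 0) < e / E"
          unfolding continuous_at_eps_delta by blast
        have d: "d > 0" "\<And>t::complex. dist t 0 < d \<Longrightarrow> dist (exp t) (exp 0) < e / E" using d0 d1 by auto
        obtain N where N: "\<And>n. n \<ge> N \<Longrightarrow> norm (s n - l) < d / B"
          using LIMSEQ_D[OF l, of "d/B"] d B by auto
        show "\<exists>N. \<forall>n\<ge>N. \<forall>x\<in>C. dist (x * exp (s n * g x)) (x * exp (l * g x)) < e"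
        proof (intro exI allI impI ballI)
          fix n x assume n: "n \<ge> N" and x: "x \<in> C"
          have x1: "norm x \<le> 1" using C(2) x by (auto simp: subset_iff)
          have t: "norm ((s n - l) * g x) < d"
          proof -
            have "norm ((s n - l) * g x) \<le> norm (s n - l) * B"
              using B(2)[OF x] by (simp add: norm_mult mult_left_mono)
            also have "\<dots> < d / B * B" using N[OF n] B by (intro mult_strict_right_mono) auto
            finally show ?thesis using B by simp
          qed
          have el: "norm (exp (l * g x)) \<le> E"
          proof -
            have "norm (exp (l * g x)) \<le> exp (norm (l * g x))" by (rule norm_exp)
            also have "\<dots> \<le> E" unfolding E_def using B(2)[OF x]
              by (simp add: norm_mult mult_left_mono)
            finally show ?thesis .
          qed
          have "x * exp (s n * g x) - x * exp (l * g x) = x * exp (l * g x) * (exp ((s n - l) * g x) - 1)"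
            by (simp add: algebra_simps exp_add[symmetric])
          hence "dist (x * exp (s n * g x)) (x * exp (l * g x)) = norm x * norm (exp (l * g x)) * norm (exp ((s n - l) * g x) - 1)"
            by (simp add: dist_norm norm_mult)
          also have "\<dots> \<le> 1 * E * norm (exp ((s n - l) * g x) - 1)"
            using x1 el by (intro mult_right_mono mult_mono) auto
          also have "\<dots> < E * (e / E)"
          proof -
            have "norm (exp ((s n - l) * g x) - 1) < e / E" using d(2)[of "(s n - l) * g x"] t by (simp add: dist_norm)
            thus ?thesis using E by (simp add: pos_less_divide_eq mult.commute)
          qed
          also have "\<dots> = e" using E by simp
          finally show "dist (x * exp (s n * g x)) (x * exp (l * g x)) < e" .
        qed
      qed
    qed auto
  qed
  have cpt: "compact (U_set f)"
    using bnd clo by (auto simp: compact_eq_bounded_closed bounded_iff)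
  have pc: "polynomially_convex (U_set f)"
    unfolding polynomially_convex_def
  proof (intro allI impI)
    fix c0 assume hull: "\<forall>p::complex poly. norm (poly p c0) \<le> (SUP w\<in>U_set f. norm (poly p w))"
    show "c0 \<in> U_set f"
    proof (rule ccontr)
      assume nc: "c0 \<notin> U_set f"
      have "\<exists>S. connected S \<and> S \<inter> U_set f = {} \<and> c0 \<in> S \<and> (\<forall>R. \<exists>w\<in>S. R < norm w)"
      proof -
        have "\<not> inj_on (\<lambda>z. z * exp (c0 * g z)) (ball 0 1)" using nc U_iff by blast
        then obtain z1 z2 where z: "z1 \<in> ball 0 1" "z2 \<in> ball 0 1" "z1 \<noteq> z2"
          and eq: "z1 * exp (c0 * g z1) = z2 * exp (c0 * g z2)"
          unfolding inj_on_def by blast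
        have z10: "z1 \<noteq> 0" using eq z(3) by auto
        have z20: "z2 \<noteq> 0" using eq z(3) by auto
        have ab: "g z1 \<noteq> g z2" using eq z(3) by auto
        define \<Lambda> where "\<Lambda> = c0 * (g z1 - g z2)"
        have eL: "exp \<Lambda> = z2 / z1"
          using eq z10 by (simp add: \<Lambda>_def right_diff_distrib exp_diff field_simps)
        have L0: "\<Lambda> \<noteq> 0" using eL z(3) z10 by auto
        define R0 where "R0 = 1 / max (norm z1) (norm z2)"
        have mpos: "max (norm z1) (norm z2) > 0" using z10 by (simp add: less_max_iff_disj)
        have m1: "max (norm z1) (norm z2) < 1" using z by auto
        have R0: "R0 > 1" using mpos m1 by (simp add: R0_def)
        have inb: "s * z1 \<in> ball 0 1 \<and> s * z2 \<in> ball 0 1" if "s \<in> ball 0 R0" for s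
        proof -
          have "norm s * max (norm z1) (norm z2) < R0 * max (norm z1) (norm z2)"
            using that mpos by (intro mult_strict_right_mono) auto
          also have "\<dots> = 1" using mpos by (simp add: R0_def)
          finally have "norm s * max (norm z1) (norm z2) < 1" .
          moreover have "norm s * norm z1 \<le> norm s * max (norm z1) (norm z2)"
            "norm s * norm z2 \<le> norm s * max (norm z1) (norm z2)" by (auto intro: mult_left_mono)
          ultimately show ?thesis by (auto simp: norm_mult)
        qed
        define D where "D s = g (s * z1) - g (s * z2)" for s
        have Dhol: "D holomorphic_on ball 0 R0"
        proof -
          have "(\<lambda>s. g (s * z1)) holomorphic_on ball 0 R0"
            by (rule holomorphic_on_compose_gen[unfolded o_def, OF _ g(1)]) (auto intro!: holomorphic_intros dest: inb)
          moreover have "(\<lambda>s. g (s * z2)) holomorphic_on ball 0 R0"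
            by (rule holomorphic_on_compose_gen[unfolded o_def, OF _ g(1)]) (auto intro!: holomorphic_intros dest: inb)
          ultimately show ?thesis unfolding D_def by (intro holomorphic_intros)
        qed
        have D0: "D 0 = 0" by (simp add: D_def)
        have D1: "D 1 \<noteq> 0" using ab by (simp add: D_def)
        have "countable {s \<in> ball 0 R0. D s = 0}"
        proof (rule holomorphic_countable_zeros[OF Dhol open_ball connected_ball fsigma_ball])
          show "\<not> D constant_on ball 0 R0"
          proof
            assume "D constant_on ball 0 R0"
            then obtain k where k: "\<And>x. x \<in> ball 0 R0 \<Longrightarrow> D x = k" unfolding constant_on_def by blast
            have "D 0 = D 1" using k[of 0] k[of 1] R0 by simp
            thus False using D0 D1 by simp
          qed
        qed
        hence cntZ: "countable (insert 0 {s \<in> ball 0 R0. D s = 0})" by simp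
        define \<Sigma> where "\<Sigma> = ball 0 R0 - insert 0 {s \<in> ball 0 R0. D s = 0}"
        have Sig: "s \<in> ball 0 R0" "s \<noteq> 0" "D s \<noteq> 0" if "s \<in> \<Sigma>" for s
          using that by (auto simp: \<Sigma>_def)
        have conS: "connected \<Sigma>" unfolding \<Sigma>_def
          by (rule connected_open_diff_countable[OF _ open_ball connected_ball cntZ]) simp
        have contD: "continuous_on (ball 0 R0) D" using Dhol holomorphic_on_imp_continuous_on by blast
        define S where "S = (\<lambda>s. \<Lambda> / D s) ` \<Sigma>"
        show ?thesis
        proof (intro exI conjI allI)
          show "connected S" unfolding S_def
          proof (rule connected_continuous_image[OF _ conS])
            show "continuous_on \<Sigma> (\<lambda>s. \<Lambda> / D s)"
              by (intro continuous_intros continuous_on_subset[OF contD]) (auto simp: \<Sigma>_def dest: Sig)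
          qed
          have "1 \<in> \<Sigma>" using R0 D1 by (auto simp: \<Sigma>_def)
          moreover have "\<Lambda> / D 1 = c0" using D1 by (simp add: \<Lambda>_def D_def)
          ultimately show "c0 \<in> S" unfolding S_def by force
          show "S \<inter> U_set f = {}"
          proof (rule ccontr)
            assume "S \<inter> U_set f \<noteq> {}"
            then obtain s where s: "s \<in> \<Sigma>" "\<Lambda> / D s \<in> U_set f" unfolding S_def by blast
            define c where "c = \<Lambda> / D s"
            have inj: "inj_on (\<lambda>z. z * exp (c * g z)) (ball 0 1)" using s(2) U_iff c_def by blast
            have cD: "c * g (s * z1) = \<Lambda> + c * g (s * z2)"
              using Sig[OF s(1)] by (simp add: c_def D_def field_simps)
            have "(s * z1) * exp (c * g (s * z1)) = (s * z2) * exp (c * g (s * z2))"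
              unfolding cD exp_add eL using z10 by simp
            moreover have "s * z1 \<noteq> s * z2" using Sig[OF s(1)] z(3) by simp
            ultimately show False using inj inb[OF Sig(1)[OF s(1)]] unfolding inj_on_def by blast
          qed
          fix R :: real
          have "isCont D 0" using contD R0 by (intro continuous_on_interior[of "ball 0 R0"]) auto
          moreover have pos: "norm \<Lambda> / (\<bar>R\<bar> + 1) > 0" using L0 by simp
          ultimately obtain \<delta> where \<delta>: "\<delta> > 0" "\<And>s. dist s 0 < \<delta> \<Longrightarrow> dist (D s) (D 0) < norm \<Lambda> / (\<bar>R\<bar> + 1)"
            unfolding continuous_at_eps_delta by blast
          have "uncountable (ball (0::complex) (min \<delta> R0))" using \<delta> R0 by (intro uncountable_ball) auto
          hence "\<not> ball 0 (min \<delta> R0) \<subseteq> insert 0 {s \<in> ball 0 R0. D s = 0}"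
            using countable_subset[OF _ cntZ] by blast
          then obtain s where s: "s \<in> ball 0 (min \<delta> R0)" "s \<notin> insert 0 {s \<in> ball 0 R0. D s = 0}"
            by blast
          have sS: "s \<in> \<Sigma>" using s by (auto simp: \<Sigma>_def)
          have "norm (D s) < norm \<Lambda> / (\<bar>R\<bar> + 1)" using \<delta>(2)[of s] s D0 by auto
          hence "norm (D s) * (\<bar>R\<bar> + 1) < norm \<Lambda>" by (simp add: divide_simps)
          hence "\<bar>R\<bar> + 1 < norm (\<Lambda> / D s)" using Sig(3)[OF sS]
            by (simp add: norm_divide divide_simps mult.commute)
          hence "R < norm (\<Lambda> / D s)" by linarith
          thus "\<exists>w\<in>S. R < norm w" using sS unfolding S_def by blast
        qed
      qed
      then obtain S where S: "connected S" "S \<inter> U_set f = {}" "c0 \<in> S" "\<And>R. \<exists>w\<in>S. R < norm w" by blast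
      from not_hull[OF cpt _ nc approx_connected[OF cpt S]] zeroU
      obtain p where "(SUP w\<in>U_set f. norm (poly p w)) < norm (poly p c0)" by blast
      with hull show False by (meson not_le)
    qed
  qed
  show ?thesis using cpt pc zeroU by blast
qed

end
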